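(* For real parameters $\alpha,\delta$ define $C:[0,1]^2\to\mathbb{R}$ by $$C(u,v;\delta,\alpha)=uv+\delta\left(1-e^{\alpha(u-u^2)}\right)\left(1-e^{\alpha(v-v^2)}\right).$$ Let $$\delta^{\star}(\alpha)=\begin{cases}\dfrac{1}{\alpha^2}, & \alpha\in(-\infty,2]\setminus\{0\},\\[2mm] \dfrac{1}{2\alpha}\exp\left\{1-\dfrac{\alpha}{2}\right\}, & \alpha>2.\end{cases}$$ Then: (i) if $\alpha=0$, then for every $\delta\in\mathbb{R}$, $C(\cdot,\cdot;\delta,0)$ is the product copula $C(u,v)=uv$; (ii) if $\alpha\neq 0$ and $|\delta|\le\delta^{\star}(\alpha)$, then $C(\cdot,\cdot;\delta,\alpha)$ is a bivariate copula, i.e. $C(u,0)=C(0,v)=0$, $C(u,1)=u$, $C(1,v)=v$ for all $u,v\in[0,1]$, and $C(u_2,v_2)-C(u_1,v_2)-C(u_2,v_1)+C(u_1,v_1)\ge 0$ for all $0\le u_1<u_2\le1$, $0\le v_1<v_2\le 1$. Its density is $$c(u,v)=\frac{\partial^2 C}{\partial u\,\partial v}=1+\alpha^2\delta(1-2u)(1-2v)\exp\{\alpha(u-u^2+v-v^2)\}\ge 0\quad\text{on }[0,1]^2.$$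
   Context: A bivariate copula is a function $C:[0,1]^2\to[0,1]$ satisfying the stated boundary conditions and the 2-increasing property. *)

theory Defs
  imports "HOL-Analysis.Analysis"
begin

definition Cfam :: "real \<Rightarrow> real \<Rightarrow> real \<Rightarrow> real \<Rightarrow> real" where
  "Cfam \<delta> \<alpha> u v =
     u * v + \<delta> * (1 - exp (\<alpha> * (u - u\<^sup>2))) * (1 - exp (\<alpha> * (v - v\<^sup>2)))"

definition cdens :: "real \<Rightarrow> real \<Rightarrow> real \<Rightarrow> real \<Rightarrow> real" where
  "cdens \<delta> \<alpha> u v =
     1 + \<alpha>\<^sup>2 * \<delta> * (1 - 2 * u) * (1 - 2 * v) * exp (\<alpha> * (u - u\<^sup>2 + v - v\<^sup>2))"

definition delta_star :: "real \<Rightarrow> real" where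
  "delta_star \<alpha> = (if \<alpha> \<le> 2 then 1 / \<alpha>\<^sup>2 else 1 / (2*\<alpha>) * exp (1 - \<alpha>/2))"

definition bivariate_copula :: "(real \<Rightarrow> real \<Rightarrow> real) \<Rightarrow> bool" where
  "bivariate_copula C \<longleftrightarrow>
     (\<forall>u\<in>{0..1}. \<forall>v\<in>{0..1}. C u v \<in> {0..1}) \<and>
     (\<forall>u\<in>{0..1}. C u 0 = 0 \<and> C 0 u = 0 \<and> C u 1 = u \<and> C 1 u = u) \<and>
     (\<forall>u1 u2 v1 v2. 0 \<le> u1 \<longrightarrow> u1 < u2 \<longrightarrow> u2 \<le> 1 \<longrightarrow> 0 \<le> v1 \<longrightarrow> v1 < v2 \<longrightarrow> v2 \<le> 1 \<longrightarrow>
        C u2 v2 - C u1 v2 - C u2 v1 + C u1 v1 \<ge> 0)"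

end

theory Submission
  imports Defs
begin

lemma E_deriv: "((\<lambda>x. exp (a*(x-x\<^sup>2))) has_real_derivative a*(1-2*x)*exp(a*(x-x\<^sup>2))) (at x)"
  by (auto intro!: derivative_eq_intros simp: algebra_simps)

lemma xexp: "(x::real) * exp (1 - x) \<le> 1"
proof (cases "x \<le> 0")
  case True then show ?thesis by (smt (verit) exp_gt_zero mult_nonpos_nonneg)
next
  case False
  have "x \<le> exp (x - 1)" using exp_ge_add_one_self[of "x-1"] by simp
  then have "x * exp (1-x) \<le> exp (x-1) * exp (1-x)" using False by (intro mult_right_mono) auto
  also have "\<dots> = 1" by (simp add: exp_add[symmetric])
  finally show ?thesis .
qed

lemma sqbound:
  assumes "\<alpha> \<noteq> 0" "\<bar>\<delta>\<bar> \<le> delta_star \<alpha>" "0 \<le> u" "u \<le> 1"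
  shows "\<alpha>\<^sup>2 * \<bar>\<delta>\<bar> * ((1-2*u)\<^sup>2 * exp (2*\<alpha>*(u-u\<^sup>2))) \<le> 1"
proof -
  define s where "s = (1-2*u)\<^sup>2"
  have s0: "0 \<le> s" unfolding s_def by simp
  have "\<bar>1-2*u\<bar> \<le> 1" using assms by (simp add: abs_le_iff)
  then have s1: "s \<le> 1" unfolding s_def by (simp add: abs_square_le_1)
  have arg: "2*\<alpha>*(u-u\<^sup>2) = \<alpha>*(1-s)/2" unfolding s_def by (simp add: power2_eq_square field_simps)
  have ee: "exp (2*\<alpha>*(u-u\<^sup>2)) = exp (\<alpha>*(1-s)/2)" by (simp only: arg)
  have a2: "\<alpha>\<^sup>2 > 0" using assms by simp
  have e0: "0 \<le> exp (\<alpha>*(1-s)/2)" by simp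
  show ?thesis
  proof (cases "\<alpha> \<le> 2")
    case True
    have d: "\<bar>\<delta>\<bar> \<le> 1/\<alpha>\<^sup>2" using assms True by (simp add: delta_star_def)
    have key: "s * exp (\<alpha>*(1-s)/2) \<le> 1"
    proof (cases "\<alpha> \<le> 0")
      case True
      have "\<alpha>*(1-s)/2 \<le> 0" using True s1 by (simp add: mult_nonpos_nonneg)
      then have "exp (\<alpha>*(1-s)/2) \<le> 1" by simp
      then show ?thesis by (rule mult_le_one[OF s1 e0])
    next
      case False
      have "\<alpha>*(1-s) \<le> 2*(1-s)" using True s1 by (intro mult_right_mono) auto
      then have "exp (\<alpha>*(1-s)/2) \<le> exp (1-s)" by simp
      then have "s * exp (\<alpha>*(1-s)/2) \<le> s * exp (1-s)" using s0 by (rule mult_left_mono)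
      then show ?thesis using xexp[of s] by linarith
    qed
    have h: "\<alpha>\<^sup>2 * \<bar>\<delta>\<bar> \<le> 1" using d a2 by (simp add: field_simps)
    have "(\<alpha>\<^sup>2 * \<bar>\<delta>\<bar>) * (s * exp (\<alpha>*(1-s)/2)) \<le> 1"
      using mult_le_one[OF h _ key] s0 e0 by simp
    then show ?thesis unfolding ee s_def[symmetric] by simp
  next
    case False
    have d: "\<bar>\<delta>\<bar> \<le> exp (1-\<alpha>/2) / (2*\<alpha>)" using assms False by (simp add: delta_star_def)
    have "\<alpha>\<^sup>2 * \<bar>\<delta>\<bar> * (s * exp (\<alpha>*(1-s)/2)) \<le> \<alpha>\<^sup>2 * (exp (1-\<alpha>/2) / (2*\<alpha>)) * (s * exp (\<alpha>*(1-s)/2))"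
      using d a2 s0 e0 by (intro mult_right_mono mult_left_mono) auto
    also have "\<dots> = (\<alpha>\<^sup>2 / (2*\<alpha>)) * s * (exp (1-\<alpha>/2) * exp (\<alpha>*(1-s)/2))" by simp
    also have "exp (1-\<alpha>/2) * exp (\<alpha>*(1-s)/2) = exp (1 - \<alpha> * s/2)"
    proof -
      have "1-\<alpha>/2 + \<alpha>*(1-s)/2 = 1 - \<alpha> * s/2" by (simp add: field_simps)
      then show ?thesis by (simp only: exp_add[symmetric])
    qed
    also have "\<alpha>\<^sup>2 / (2*\<alpha>) = \<alpha>/2" using assms(1) by (simp add: power2_eq_square)
    also have "\<alpha>/2 * s * exp (1 - \<alpha> * s/2) = (\<alpha> * s/2) * exp (1 - \<alpha> * s/2)" by simp
    also have "\<dots> \<le> 1" by (rule xexp)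
    finally show ?thesis unfolding ee s_def[symmetric] .
  qed
qed

lemma alg: "(d::real)*d = \<delta>*\<delta> \<Longrightarrow> (a*\<delta>*p*q*(e*f))\<^sup>2 = (a*d*(p\<^sup>2*e\<^sup>2))*(a*d*(q\<^sup>2*f\<^sup>2))"
  by algebra

lemma exp2: "exp (2*(\<alpha>::real)*(u-u\<^sup>2)) = (exp (\<alpha>*(u-u\<^sup>2)))\<^sup>2"
  using exp_double[of "\<alpha>*(u-u\<^sup>2)"] by (simp add: mult.assoc)

lemma expsum: "exp ((\<alpha>::real) * (u - u\<^sup>2 + v - v\<^sup>2)) = exp (\<alpha>*(u-u\<^sup>2)) * exp (\<alpha>*(v-v\<^sup>2))"
proof -
  have eq: "\<alpha> * (u - u\<^sup>2 + v - v\<^sup>2) = \<alpha>*(u-u\<^sup>2) + \<alpha>*(v-v\<^sup>2)" by (simp add: algebra_simps)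
  show ?thesis unfolding eq by (rule exp_add)
qed

lemma cdens_alt: "cdens \<delta> \<alpha> u v = 1 + \<alpha>\<^sup>2 * \<delta> * (1 - 2 * u) * (1 - 2 * v) * (exp (\<alpha>*(u-u\<^sup>2)) * exp (\<alpha>*(v-v\<^sup>2)))"
  unfolding cdens_def expsum ..

lemma cdens_nonneg:
  assumes "\<alpha> \<noteq> 0" "\<bar>\<delta>\<bar> \<le> delta_star \<alpha>" "0 \<le> u" "u \<le> 1" "0 \<le> v" "v \<le> 1"
  shows "cdens \<delta> \<alpha> u v \<ge> 0"
proof -
  define x where "x = \<alpha>\<^sup>2 * \<delta> * (1 - 2 * u) * (1 - 2 * v) * (exp (\<alpha>*(u-u\<^sup>2)) * exp (\<alpha>*(v-v\<^sup>2)))"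
  have p: "\<alpha>\<^sup>2 * \<bar>\<delta>\<bar> * ((1-2*u)\<^sup>2 * (exp (\<alpha>*(u-u\<^sup>2)))\<^sup>2) \<le> 1" using sqbound[OF assms(1-4)] unfolding exp2 .
  have q: "\<alpha>\<^sup>2 * \<bar>\<delta>\<bar> * ((1-2 * v)\<^sup>2 * (exp (\<alpha>*(v-v\<^sup>2)))\<^sup>2) \<le> 1" using sqbound[OF assms(1,2,5,6)] unfolding exp2 .
  have p0: "0 \<le> \<alpha>\<^sup>2 * \<bar>\<delta>\<bar> * ((1-2*u)\<^sup>2 * (exp (\<alpha>*(u-u\<^sup>2)))\<^sup>2)" by simp
  have "x\<^sup>2 = (\<alpha>\<^sup>2 * \<bar>\<delta>\<bar> * ((1-2*u)\<^sup>2 * (exp (\<alpha>*(u-u\<^sup>2)))\<^sup>2)) * (\<alpha>\<^sup>2 * \<bar>\<delta>\<bar> * ((1-2 * v)\<^sup>2 * (exp (\<alpha>*(v-v\<^sup>2)))\<^sup>2))"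
    unfolding x_def by (rule alg) (rule abs_mult_self_eq)
  also have "\<dots> \<le> 1" using p q p0 by (simp add: mult_le_one)
  finally have "\<bar>x\<bar> \<le> 1" by (simp add: abs_square_le_1)
  then show ?thesis unfolding cdens_alt x_def[symmetric] by linarith
qed

lemma copula_of_dens:
  assumes dens: "\<And>u v. 0 \<le> u \<Longrightarrow> u \<le> 1 \<Longrightarrow> 0 \<le> v \<Longrightarrow> v \<le> 1 \<Longrightarrow> cdens \<delta> \<alpha> u v \<ge> 0"
  shows "bivariate_copula (Cfam \<delta> \<alpha>)"
proof -
  define E where "E = (\<lambda>x. exp (\<alpha>*(x-x\<^sup>2)))"
  define E' where "E' = (\<lambda>x. \<alpha>*(1-2*x)*exp(\<alpha>*(x-x\<^sup>2)))"
  have ED: "(E has_real_derivative E' x) (at x)" for x unfolding E_def E'_def by (rule E_deriv)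
  have C: "Cfam \<delta> \<alpha> u v = u* v + \<delta>*(1 - E u)*(1 - E v)" for u v unfolding Cfam_def E_def by simp
  have bd: "\<forall>u\<in>{0..1}. Cfam \<delta> \<alpha> u 0 = 0 \<and> Cfam \<delta> \<alpha> 0 u = 0 \<and> Cfam \<delta> \<alpha> u 1 = u \<and> Cfam \<delta> \<alpha> 1 u = u"
    unfolding Cfam_def by simp
  have inc: "Cfam \<delta> \<alpha> u2 v2 - Cfam \<delta> \<alpha> u1 v2 - Cfam \<delta> \<alpha> u2 v1 + Cfam \<delta> \<alpha> u1 v1 \<ge> 0"
    if h: "0 \<le> u1" "u1 < u2" "u2 \<le> 1" "0 \<le> v1" "v1 < v2" "v2 \<le> 1" for u1 u2 v1 v2
  proof -
    obtain a where a: "u1 < a" "a < u2" "E u2 - E u1 = (u2-u1) * E' a"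
      using MVT2[of u1 u2 E E'] ED h by blast
    obtain b where b: "v1 < b" "b < v2" "E v2 - E v1 = (v2-v1) * E' b"
      using MVT2[of v1 v2 E E'] ED h by blast
    have "Cfam \<delta> \<alpha> u2 v2 - Cfam \<delta> \<alpha> u1 v2 - Cfam \<delta> \<alpha> u2 v1 + Cfam \<delta> \<alpha> u1 v1
        = (u2-u1)*(v2-v1) + \<delta> * (E u2 - E u1) * (E v2 - E v1)" unfolding C by (simp add: algebra_simps)
    also have "\<dots> = (u2-u1)*(v2-v1) * (1 + \<delta> * E' a * E' b)" by (simp only: a(3) b(3)) (simp add: algebra_simps)
    also have "1 + \<delta> * E' a * E' b = cdens \<delta> \<alpha> a b"
      unfolding cdens_alt E'_def by (simp add: power2_eq_square algebra_simps)
    finally show ?thesis using dens[of a b] a b h by simp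
  qed
  have rng: "\<forall>u\<in>{0..1}. \<forall>v\<in>{0..1}. Cfam \<delta> \<alpha> u v \<in> {0..1}"
  proof (intro ballI)
    fix u v :: real assume u: "u \<in> {0..1}" and v: "v \<in> {0..1}"
    have lo: "0 \<le> Cfam \<delta> \<alpha> u v"
    proof (cases "u = 0 \<or> v = 0")
      case True then show ?thesis using bd u v by auto
    next
      case False
      then show ?thesis using inc[of 0 u 0 v] u v bd by auto
    qed
    have hi: "Cfam \<delta> \<alpha> u v \<le> v"
    proof (cases "u = 1 \<or> v = 0")
      case True then show ?thesis using bd u v by auto
    next
      case False
      then show ?thesis using inc[of u 1 0 v] u v bd by auto
    qed
    show "Cfam \<delta> \<alpha> u v \<in> {0..1}" using lo hi v by auto
  qed
  show ?thesis unfolding bivariate_copula_def using rng bd inc by blast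
qed

lemma dv: "deriv (\<lambda>v'. Cfam \<delta> \<alpha> u v') v = u - \<delta>*(1 - exp(\<alpha>*(u-u\<^sup>2)))*(\<alpha>*(1-2 * v)*exp(\<alpha>*(v-v\<^sup>2)))"
proof (rule DERIV_imp_deriv)
  have "((\<lambda>y. u* y + \<delta>*(1 - exp(\<alpha>*(u-u\<^sup>2)))*(1 - exp(\<alpha>*(y-y\<^sup>2)))) has_real_derivative
      u*1 + \<delta>*(1 - exp(\<alpha>*(u-u\<^sup>2)))*(0 - \<alpha>*(1-2 * v)*exp(\<alpha>*(v-v\<^sup>2)))) (at v)"
    by (rule derivative_eq_intros E_deriv refl)+ simp
  then show "((\<lambda>v'. Cfam \<delta> \<alpha> u v') has_real_derivative u - \<delta>*(1 - exp(\<alpha>*(u-u\<^sup>2)))*(\<alpha>*(1-2 * v)*exp(\<alpha>*(v-v\<^sup>2)))) (at v)"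
    unfolding Cfam_def by (simp add: algebra_simps)
qed

lemma du: "((\<lambda>u'. deriv (\<lambda>v'. Cfam \<delta> \<alpha> u' v') v) has_real_derivative cdens \<delta> \<alpha> u v) (at u)"
proof -
  have "((\<lambda>y. y - \<delta>*(1 - exp(\<alpha>*(y-y\<^sup>2)))*(\<alpha>*(1-2 * v)*exp(\<alpha>*(v-v\<^sup>2)))) has_real_derivative
     1 - \<delta>*(0 - \<alpha>*(1-2*u)*exp(\<alpha>*(u-u\<^sup>2)))*(\<alpha>*(1-2 * v)*exp(\<alpha>*(v-v\<^sup>2)))) (at u)"
    by (rule derivative_eq_intros E_deriv refl)+ simp
  moreover have "1 - \<delta>*(0 - \<alpha>*(1-2*u)*exp(\<alpha>*(u-u\<^sup>2)))*(\<alpha>*(1-2 * v)*exp(\<alpha>*(v-v\<^sup>2))) = cdens \<delta> \<alpha> u v"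
    unfolding cdens_alt by (simp add: power2_eq_square algebra_simps)
  ultimately show ?thesis unfolding dv by simp
qed

theorem mainTheorem1:
  fixes \<alpha> \<delta> :: real
  shows "(\<alpha> = 0 \<longrightarrow>
            (\<forall>u\<in>{0..1}. \<forall>v\<in>{0..1}. Cfam \<delta> 0 u v = u * v) \<and>
            bivariate_copula (Cfam \<delta> 0))
       \<and> (\<alpha> \<noteq> 0 \<and> \<bar>\<delta>\<bar> \<le> delta_star \<alpha> \<longrightarrow>
            bivariate_copula (Cfam \<delta> \<alpha>) \<and>
            (\<forall>u\<in>{0..1}. \<forall>v\<in>{0..1}.
               ((\<lambda>u'. deriv (\<lambda>v'. Cfam \<delta> \<alpha> u' v') v) has_real_derivative cdens \<delta> \<alpha> u v) (at u)
               \<and> cdens \<delta> \<alpha> u v \<ge> 0))"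
proof (intro conjI impI)
  show "\<forall>u\<in>{0..1}. \<forall>v\<in>{0..1}. Cfam \<delta> 0 u v = u * v" by (simp add: Cfam_def)
  show "bivariate_copula (Cfam \<delta> 0)" by (rule copula_of_dens) (simp add: cdens_def)
next
  assume h: "\<alpha> \<noteq> 0 \<and> \<bar>\<delta>\<bar> \<le> delta_star \<alpha>"
  then show "bivariate_copula (Cfam \<delta> \<alpha>)" by (intro copula_of_dens cdens_nonneg) auto
  show "\<forall>u\<in>{0..1}. \<forall>v\<in>{0..1}.
               ((\<lambda>u'. deriv (\<lambda>v'. Cfam \<delta> \<alpha> u' v') v) has_real_derivative cdens \<delta> \<alpha> u v) (at u)
               \<and> cdens \<delta> \<alpha> u v \<ge> 0" using h du cdens_nonneg by auto
qed

end
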